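(* With $G$, $d$, $G_0$, $X$ and the topology $\tau$ as in the context, the space $(X,\tau)$ is regular.
   Context: Let $G$ be a Polish group, $d$ a compatible right-invariant metric on $G$ (i.e. $d(g_0h,g_1h)=d(g_0,g_1)$) bounded by $1$, and $G_0$ a countable dense subgroup of $G$. Let $\mathcal L(G,d)$ be the set of functions $f:G\to[0,1]$ with $|f(g_1)-f(g_2)|\le d(g_1,g_2)$ for all $g_1,g_2$. Let $\mathbb Q^{<\mathbb N}$ be the set of finite sequences of rationals; for $s\in\mathbb Q^{<\mathbb N}$ and rationals $a_1,\dots,a_k$, $sa_1\dots a_k$ denotes the sequence $s$ followed by $a_1,\dots,a_k$ (natural numbers are regarded as rationals). Elements of $\mathcal L(G,d)^{\mathbb Q^{<\mathbb N}}$ are families $\vec f=(f_s)_{s\in\mathbb Q^{<\mathbb N}}$, and $G$ acts by $(g\cdot\vec f)_s(g_0)=f_s(g_0g)$. Let $X$ be the set of $\vec f\in\mathcal L(G,d)^{\mathbb Q^{<\mathbb N}}$ such that, writing $t=sq_0q_1q_2\,0\,m\,n$ and $u=sq_0q_1q_2\,1\,m\,n$: (1) for all $s\in\mathbb Q^{<\mathbb N}$, $g_0\in G_0$, $m,n\in\mathbb N$, $q_0,q_1,q_2,\epsilon\in\mathbb Q\cap(0,1)$ with $0<q_i\pm\epsilon<1$ ($i=0,1,2$): $f_t(g_0)<q_1-\epsilon$ or $f_s(g_0)\le q_0+\epsilon$; (2) for the same range of parameters: $f_u(g_0)\ge q_2+\epsilon$ or $f_t(g_0)\ge q_1-\epsilon$;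 (3) for all $s\in\mathbb Q^{<\mathbb N}$, $g_0\in G_0$, $q_0,\epsilon\in\mathbb Q\cap(0,1)$: if $f_s(g_0)<q_0$ then there are $q_1,q_2\in\mathbb Q$, $g_1\in G_0$, $m,n\in\mathbb N$ with $0<q_2<q_1<q_0<1$, $d(g_0,g_1)<\epsilon$, and $f_u(g_1)<q_2$ where $u=sq_0q_1q_2\,1\,m\,n$. The topology $\tau$ on $X$ is the one generated by the subbasis of all sets $\{\vec f\in X: f_s(g_0)<q_0\}$ for $s\in\mathbb Q^{<\mathbb N}$, $g_0\in G_0$, $q_0\in\mathbb Q$. *)

theory Defs
  imports "HOL-Analysis.Analysis"
begin

text \<open>The Polish group G is modelled as a type of class group_add; the group
  operation is written + (not assumed commutative), the identity is 0 and the
  inverse is unary minus.\<close>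

definition gtop :: "('g \<Rightarrow> 'g \<Rightarrow> real) \<Rightarrow> 'g topology" where
  "gtop d = Metric_space.mtopology UNIV d"

definition polish_group_metric :: "('g::group_add \<Rightarrow> 'g \<Rightarrow> real) \<Rightarrow> bool" where
  "polish_group_metric d \<longleftrightarrow>
     Metric_space UNIV d \<and>
     completely_metrizable_space (gtop d) \<and> separable_space (gtop d) \<and>
     continuous_map (prod_topology (gtop d) (gtop d)) (gtop d) (\<lambda>(x, y). x + y) \<and>
     continuous_map (gtop d) (gtop d) uminus"

definition right_invariant :: "('g::group_add \<Rightarrow> 'g \<Rightarrow> real) \<Rightarrow> bool" where
  "right_invariant d \<longleftrightarrow> (\<forall>g0 g1 h. d (g0 + h) (g1 + h) = d g0 g1)"

definition countable_dense_subgroup :: "('g::group_add \<Rightarrow> 'g \<Rightarrow> real) \<Rightarrow> 'g set \<Rightarrow> bool" where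
  "countable_dense_subgroup d G0 \<longleftrightarrow>
     countable G0 \<and> 0 \<in> G0 \<and> (\<forall>x\<in>G0. \<forall>y\<in>G0. x + y \<in> G0) \<and> (\<forall>x\<in>G0. - x \<in> G0) \<and>
     (gtop d) closure_of G0 = UNIV"

definition Lip :: "('g \<Rightarrow> 'g \<Rightarrow> real) \<Rightarrow> ('g \<Rightarrow> real) set" where
  "Lip d = {f. (\<forall>g. 0 \<le> f g \<and> f g \<le> 1) \<and> (\<forall>g1 g2. \<bar>f g1 - f g2\<bar> \<le> d g1 g2)}"

definition unitQ :: "rat \<Rightarrow> bool" where
  "unitQ q \<longleftrightarrow> 0 < q \<and> q < 1"

text \<open>The space X.  Sequences s q0 q1 q2 i m n are s @ [q0,q1,q2,i,m,n].\<close>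
definition Xsp :: "('g \<Rightarrow> 'g \<Rightarrow> real) \<Rightarrow> 'g set \<Rightarrow> (rat list \<Rightarrow> 'g \<Rightarrow> real) set" where
  "Xsp d G0 = {F. (\<forall>s. F s \<in> Lip d) \<and>
    (\<forall>s. \<forall>g0\<in>G0. \<forall>m n::nat. \<forall>q0 q1 q2 \<epsilon>.
       unitQ q0 \<and> unitQ q1 \<and> unitQ q2 \<and> unitQ \<epsilon> \<and>
       unitQ (q0 + \<epsilon>) \<and> unitQ (q0 - \<epsilon>) \<and> unitQ (q1 + \<epsilon>) \<and> unitQ (q1 - \<epsilon>) \<and>
       unitQ (q2 + \<epsilon>) \<and> unitQ (q2 - \<epsilon>) \<longrightarrow>
       (F (s @ [q0, q1, q2, 0, of_nat m, of_nat n]) g0 < of_rat (q1 - \<epsilon>)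
          \<or> F s g0 \<le> of_rat (q0 + \<epsilon>)) \<and>
       (F (s @ [q0, q1, q2, 1, of_nat m, of_nat n]) g0 \<ge> of_rat (q2 + \<epsilon>)
          \<or> F (s @ [q0, q1, q2, 0, of_nat m, of_nat n]) g0 \<ge> of_rat (q1 - \<epsilon>))) \<and>
    (\<forall>s. \<forall>g0\<in>G0. \<forall>q0 \<epsilon>. unitQ q0 \<and> unitQ \<epsilon> \<and> F s g0 < of_rat q0 \<longrightarrow>
       (\<exists>q1 q2. \<exists>g1\<in>G0. \<exists>m n::nat. 0 < q2 \<and> q2 < q1 \<and> q1 < q0 \<and> q0 < 1 \<and>
          d g0 g1 < of_rat \<epsilon> \<and>
          F (s @ [q0, q1, q2, 1, of_nat m, of_nat n]) g1 < of_rat q2))}"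

definition tau :: "('g \<Rightarrow> 'g \<Rightarrow> real) \<Rightarrow> 'g set \<Rightarrow> (rat list \<Rightarrow> 'g \<Rightarrow> real) topology" where
  "tau d G0 = topology_generated_by
     {{F \<in> Xsp d G0. F s g0 < of_rat q0} | s g0 q0. g0 \<in> G0}"

end

theory Submission
  imports Defs
begin

lemma regular_generated:
  fixes S :: "'a set set"
  defines "T \<equiv> topology_generated_by S"
  assumes H: "\<And>B x. B \<in> S \<Longrightarrow> x \<in> B \<Longrightarrow> \<exists>U. openin T U \<and> x \<in> U \<and> T closure_of U \<subseteq> B"
  shows "regular_space T"
proof -
  have gen: "\<forall>x\<in>W. \<exists>U. openin T U \<and> x \<in> U \<and> T closure_of U \<subseteq> W"
    if "generate_topology_on S W" for W
    using that
  proof (induction rule: generate_topology_on.induct)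
    case Empty
    then show ?case by blast
  next
    case (Int a b)
    show ?case
    proof
      fix x assume "x \<in> a \<inter> b"
      then have xa: "x \<in> a" and xb: "x \<in> b" by auto
      obtain U1 where u1: "openin T U1" "x \<in> U1" "T closure_of U1 \<subseteq> a"
        using Int.IH(1) xa by blast
      obtain U2 where u2: "openin T U2" "x \<in> U2" "T closure_of U2 \<subseteq> b"
        using Int.IH(2) xb by blast
      have "T closure_of (U1 \<inter> U2) \<subseteq> T closure_of U1 \<inter> T closure_of U2"
        by (simp add: closure_of_mono)
      then show "\<exists>U. openin T U \<and> x \<in> U \<and> T closure_of U \<subseteq> a \<inter> b"
        using u1 u2 by (intro exI[of _ "U1 \<inter> U2"]) (auto simp: openin_Int)
    qed
  next
    case (UN K)
    show ?case
    proof
      fix x assume "x \<in> \<Union>K"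
      then obtain k where k: "k \<in> K" "x \<in> k" by blast
      then obtain U where "openin T U" "x \<in> U" "T closure_of U \<subseteq> k" using UN.IH by blast
      then show "\<exists>U. openin T U \<and> x \<in> U \<and> T closure_of U \<subseteq> \<Union>K" using k by blast
    qed
  next
    case (Basis s)
    then show ?case using H by simp
  qed
  show ?thesis
    unfolding regular_space
  proof (intro allI impI)
    fix C a assume A: "closedin T C \<and> a \<in> topspace T - C"
    then have "openin T (topspace T - C)" using closedin_def by blast
    then have "generate_topology_on S (topspace T - C)"
      unfolding T_def by (simp add: openin_topology_generated_by_iff)
    then obtain U where "openin T U" "a \<in> U" "T closure_of U \<subseteq> topspace T - C"
      using gen A by blast
    then show "\<exists>U. openin T U \<and> a \<in> U \<and> disjnt C (T closure_of U)"
      by (auto simp: disjnt_def)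
  qed
qed

lemma Xsp_lip: "F \<in> Xsp d G0 \<Longrightarrow> 0 \<le> F s g \<and> F s g \<le> 1 \<and> \<bar>F s g1 - F s g2\<bar> \<le> d g1 g2"
  unfolding Xsp_def Lip_def by blast

lemma Xsp_1:
  assumes "F \<in> Xsp d G0" "g0 \<in> G0"
    "unitQ q0 \<and> unitQ q1 \<and> unitQ q2 \<and> unitQ \<epsilon> \<and>
       unitQ (q0 + \<epsilon>) \<and> unitQ (q0 - \<epsilon>) \<and> unitQ (q1 + \<epsilon>) \<and> unitQ (q1 - \<epsilon>) \<and>
       unitQ (q2 + \<epsilon>) \<and> unitQ (q2 - \<epsilon>)"
  shows "(F (s @ [q0, q1, q2, 0, of_nat m, of_nat n]) g0 < of_rat (q1 - \<epsilon>)
          \<or> F s g0 \<le> of_rat (q0 + \<epsilon>)) \<and>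
       (F (s @ [q0, q1, q2, 1, of_nat m, of_nat n]) g0 \<ge> of_rat (q2 + \<epsilon>)
          \<or> F (s @ [q0, q1, q2, 0, of_nat m, of_nat n]) g0 \<ge> of_rat (q1 - \<epsilon>))"
proof -
  have "\<forall>s. \<forall>g0\<in>G0. \<forall>m n::nat. \<forall>q0 q1 q2 \<epsilon>.
       unitQ q0 \<and> unitQ q1 \<and> unitQ q2 \<and> unitQ \<epsilon> \<and>
       unitQ (q0 + \<epsilon>) \<and> unitQ (q0 - \<epsilon>) \<and> unitQ (q1 + \<epsilon>) \<and> unitQ (q1 - \<epsilon>) \<and>
       unitQ (q2 + \<epsilon>) \<and> unitQ (q2 - \<epsilon>) \<longrightarrow>
       (F (s @ [q0, q1, q2, 0, of_nat m, of_nat n]) g0 < of_rat (q1 - \<epsilon>)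
          \<or> F s g0 \<le> of_rat (q0 + \<epsilon>)) \<and>
       (F (s @ [q0, q1, q2, 1, of_nat m, of_nat n]) g0 \<ge> of_rat (q2 + \<epsilon>)
          \<or> F (s @ [q0, q1, q2, 0, of_nat m, of_nat n]) g0 \<ge> of_rat (q1 - \<epsilon>))"
    using assms(1) unfolding Xsp_def mem_Collect_eq by (elim conjE) assumption
  then show ?thesis using assms(2,3) by blast
qed

lemma Xsp_3:
  assumes "F \<in> Xsp d G0" "g0 \<in> G0" "unitQ q0" "unitQ \<epsilon>" "F s g0 < of_rat q0"
  shows "\<exists>q1 q2. \<exists>g1\<in>G0. \<exists>m n::nat. 0 < q2 \<and> q2 < q1 \<and> q1 < q0 \<and> q0 < 1 \<and>
          d g0 g1 < of_rat \<epsilon> \<and>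
          F (s @ [q0, q1, q2, 1, of_nat m, of_nat n]) g1 < of_rat q2"
proof -
  have "\<forall>s. \<forall>g0\<in>G0. \<forall>q0 \<epsilon>. unitQ q0 \<and> unitQ \<epsilon> \<and> F s g0 < of_rat q0 \<longrightarrow>
       (\<exists>q1 q2. \<exists>g1\<in>G0. \<exists>m n::nat. 0 < q2 \<and> q2 < q1 \<and> q1 < q0 \<and> q0 < 1 \<and>
          d g0 g1 < of_rat \<epsilon> \<and>
          F (s @ [q0, q1, q2, 1, of_nat m, of_nat n]) g1 < of_rat q2)"
    using assms(1) unfolding Xsp_def mem_Collect_eq by (elim conjE) assumption
  then show ?thesis using assms(2-) by blast
qed

lemma tau_open: "g \<in> G0 \<Longrightarrow> openin (tau d G0) {F \<in> Xsp d G0. F s g < of_rat q}"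
  unfolding tau_def by (rule topology_generated_by_Basis) blast

lemma tau_topspace: "topspace (tau d G0) \<subseteq> Xsp d G0"
  unfolding tau_def topology_generated_by_topspace by blast

lemma basis_case:
  assumes g0: "g0 \<in> G0" and x: "x \<in> Xsp d G0" and xs: "x s g0 < of_rat q0"
  shows "\<exists>U. openin (tau d G0) U \<and> x \<in> U \<and>
     (tau d G0) closure_of U \<subseteq> {F \<in> Xsp d G0. F s g0 < of_rat q0}"
proof (cases "q0 > 1")
  case True
  have "(tau d G0) closure_of {F \<in> Xsp d G0. F s g0 < of_rat q0} \<subseteq> {F \<in> Xsp d G0. F s g0 < of_rat q0}"
  proof
    fix y assume "y \<in> (tau d G0) closure_of {F \<in> Xsp d G0. F s g0 < of_rat q0}"
    then have y: "y \<in> Xsp d G0" using closure_of_subset_topspace tau_topspace by (meson subsetD)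
    have "y s g0 \<le> 1" using Xsp_lip[OF y] by blast
    moreover have "(1::real) < of_rat q0" using True
      by (metis of_rat_1 of_rat_less)
    ultimately have "y s g0 < of_rat q0" by linarith
    then show "y \<in> {F \<in> Xsp d G0. F s g0 < of_rat q0}" using y by blast
  qed
  then show ?thesis using tau_open[OF g0] x xs by blast
next
  case False
  obtain q0' where q0': "x s g0 < of_rat q0'" "of_rat q0' < (of_rat q0 :: real)"
    using of_rat_dense[OF xs] by blast
  have "0 \<le> x s g0" using Xsp_lip[OF x] by blast
  then have "(0::real) < of_rat q0'" using q0' by linarith
  then have q0'pos: "0 < q0'" by (simp add: zero_less_of_rat_iff)
  have q0'q0: "q0' < q0" using q0' by (simp add: of_rat_less)
  define e where "e = (q0 - q0') / 2"
  have uq0': "unitQ q0'" using q0'pos q0'q0 False by (simp add: unitQ_def)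
  have ue: "unitQ e" using q0'pos q0'q0 False by (simp add: unitQ_def e_def)
  obtain q1 q2 g1 m n where g1: "g1 \<in> G0" and qs: "0 < q2" "q2 < q1" "q1 < q0'" "q0' < 1"
    and dg: "d g0 g1 < of_rat e"
    and xu: "x (s @ [q0', q1, q2, 1, of_nat m, of_nat n]) g1 < of_rat q2"
    using Xsp_3[OF x g0 uq0' ue q0'(1)] by blast
  define e2 where "e2 = min e (min q2 (1 - q0')) / 2"
  have e2: "0 < e2" "e2 < e" "e2 < q2" "e2 < 1 - q0'"
    using qs ue unfolding e2_def unitQ_def by auto
  have uall: "unitQ q0' \<and> unitQ q1 \<and> unitQ q2 \<and> unitQ e2 \<and>
       unitQ (q0' + e2) \<and> unitQ (q0' - e2) \<and> unitQ (q1 + e2) \<and> unitQ (q1 - e2) \<and>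
       unitQ (q2 + e2) \<and> unitQ (q2 - e2)"
    using e2 qs unfolding unitQ_def by linarith
  define u where "u = s @ [q0', q1, q2, 1, of_nat m, of_nat n]"
  define t where "t = s @ [q0', q1, q2, 0, of_nat m, of_nat n]"
  define U where "U = {F \<in> Xsp d G0. F u g1 < of_rat q2}"
  have oU: "openin (tau d G0) U" unfolding U_def using tau_open[OF g1] .
  have xU: "x \<in> U" unfolding U_def u_def using x xu by blast
  have "(tau d G0) closure_of U \<subseteq> {F \<in> Xsp d G0. F s g0 < of_rat q0}"
  proof
    fix y assume ycl: "y \<in> (tau d G0) closure_of U"
    then have y: "y \<in> Xsp d G0" using closure_of_subset_topspace tau_topspace by (meson subsetD)
    have "y s g0 < of_rat q0"
    proof (rule ccontr)
      assume "\<not> y s g0 < of_rat q0"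
      then have ge: "y s g0 \<ge> of_rat q0" by simp
      have "\<bar>y s g0 - y s g1\<bar> \<le> d g0 g1" using Xsp_lip[OF y] by blast
      moreover have "of_rat (q0' + e2) < (of_rat (q0 - e) :: real)"
        using e2 unfolding e_def by (simp add: of_rat_less field_simps)
      moreover have "(of_rat (q0 - e) :: real) = of_rat q0 - of_rat e" by (simp add: of_rat_diff)
      ultimately have "y s g1 > of_rat (q0' + e2)" using ge dg by linarith
      then have yt: "y t g1 < of_rat (q1 - e2)"
        using Xsp_1[OF y g1 uall, of s m n] unfolding t_def by linarith
      define V where "V = {F \<in> Xsp d G0. F t g1 < of_rat (q1 - e2)}"
      have oV: "openin (tau d G0) V" unfolding V_def using tau_open[OF g1] .
      have yV: "y \<in> V" unfolding V_def using y yt by blast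
      obtain z where z: "z \<in> U" "z \<in> V" using ycl oV yV unfolding in_closure_of by blast
      then have zX: "z \<in> Xsp d G0" and zu: "z u g1 < of_rat q2" and zt: "z t g1 < of_rat (q1 - e2)"
        unfolding U_def V_def by auto
      have "of_rat q2 < (of_rat (q2 + e2) :: real)" using e2 by (simp add: of_rat_less)
      then show False
        using Xsp_1[OF zX g1 uall, of s m n] zu zt unfolding t_def u_def by linarith
    qed
    then show "y \<in> {F \<in> Xsp d G0. F s g0 < of_rat q0}" using y by blast
  qed
  then show ?thesis using oU xU by blast
qed

theorem lemma2p5:
  fixes d :: "'g::group_add \<Rightarrow> 'g \<Rightarrow> real" and G0 :: "'g set"
  assumes "polish_group_metric d"
    and "right_invariant d"
    and "\<forall>x y. d x y \<le> 1"
    and "countable_dense_subgroup d G0"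
  shows "regular_space (tau d G0)"
  unfolding tau_def
proof (rule regular_generated)
  fix B x
  assume B: "B \<in> {{F \<in> Xsp d G0. F s g0 < of_rat q0} | s g0 q0. g0 \<in> G0}" and x: "x \<in> B"
  then obtain s g0 q0 where g0: "g0 \<in> G0" and Bd: "B = {F \<in> Xsp d G0. F s g0 < of_rat q0}" by blast
  show "\<exists>U. openin (topology_generated_by {{F \<in> Xsp d G0. F s g0 < of_rat q0} | s g0 q0. g0 \<in> G0}) U \<and>
           x \<in> U \<and> topology_generated_by {{F \<in> Xsp d G0. F s g0 < of_rat q0} | s g0 q0. g0 \<in> G0} closure_of U \<subseteq> B"
    using basis_case[OF g0, of x d s q0] x unfolding Bd tau_def by blast
qed

end
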